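(* Let $T\ge 1$ be an integer and $M>0$. Assume: (A1) $f:\{1,\dots,T\}\times\mathbb{R}\times[-M,M]\to\mathbb{R}$ is such that $f(k,\cdot,\cdot)$ is continuous on $\mathbb{R}\times[-M,M]$ for each $k\in\{1,\dots,T\}$; $p:\{1,\dots,T+1\}\to\mathbb{R}$ and $g:\{1,\dots,T\}\to\mathbb{R}$; (A2) there exists $\alpha>0$ such that $y f(k,y,u)\le 0$ for all $|y|\ge\alpha$, all $|u|\le M$ and all $k=1,\dots,T$; (A3) $m=\min_{k\in\{1,\dots,T+1\}}p(k)>0$. Then for every fixed $u\in L_M$ the set $V_u$ is nonempty, i.e. there exists at least one solution $x\in V_u$ of the problem $$\Delta\big(p(k)\Delta x(k-1)\big)+f(k,x(k),u(k))=g(k),\quad k=1,\dots,T,\qquad x(0)=x(T+1)=0.$$ Moreover, let $\{u_n\}_{n\ge1}\subset L_M$ be a sequence converging to $\overline{u}\in L_M$ (in the maximum norm). Then for any sequence $\{x_n\}_{n\ge1}$ with $x_n\in V_{u_n}$ for each $n$, there exist a subsequence $\{x_{n_i}\}_{i\ge1}$ and $\overline{x}\in E$ such that $x_{n_i}\to\overline{x}$ as $i\to\infty$ and $J_{\overline{u}}(\overline{x})=\inf_{y\in E}J_{\overline{u}}(y)$. Furthermore $\overline{x}\in V_{\overline{u}}$, i.e. $\overline{x}$ satisfies $$\Delta\big(p(k)\Delta \overline{x}(k-1)\big)+f(k,\overline{x}(k),\overline{u}(k))=g(k),\quad k=1,\dots,T,\qquad \overline{x}(0)=\overline{x}(T+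1)=0.$$
   Context: For integers $A\le B$, $[A,B]$ denotes the discrete interval $\{A,A+1,\dots,B\}$. $\Delta$ is the forward difference: $\Delta x(k)=x(k+1)-x(k)$. $L_M=\{u:\{1,\dots,T\}\to\mathbb{R} : \max_{k}|u(k)|\le M\}$, with the maximum norm. $E$ is the space of functions $y:\{0,\dots,T+1\}\to\mathbb{R}$ with $y(0)=y(T+1)=0$, normed by $\|y\|=\sqrt{\sum_{k=1}^{T}(\Delta y(k))^2}$ (equivalent to the Euclidean norm; convergence in $E$ refers to this norm). For $k\in\{1,\dots,T\}$, $y\in\mathbb{R}$, $|u|\le M$, let $F(k,y,u)=\int_0^{y}f(k,t,u)\,dt$. For $u\in L_M$ the functional $J_u:E\to\mathbb{R}$ is $$J_u(y)=\sum_{k=1}^{T+1}\frac{p(k)}{2}\big(\Delta y(k-1)\big)^2-\sum_{k=1}^{T}F(k,y(k),u(k))+\sum_{k=1}^{T}g(k)y(k),$$ and $V_u=\{x\in E: J_u(x)=\inf_{v\in E}J_u(v)\ \text{and}\ \tfrac{d}{dx}J_u(x)=0\}$ (the set of minimizers of $J_u$ at which its derivative vanishes). *)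

theory Defs
  imports "HOL-Analysis.Analysis"
begin

definition fdiff :: "(nat \<Rightarrow> real) \<Rightarrow> nat \<Rightarrow> real" where
  "fdiff x k = x (Suc k) - x k"

text \<open>The space E: functions on {0..T+1} vanishing at 0 and T+1
  (represented as nat \<Rightarrow> real, extended by 0 beyond T+1).\<close>
definition Espace :: "nat \<Rightarrow> (nat \<Rightarrow> real) set" where
  "Espace T = {y. y 0 = 0 \<and> y (T + 1) = 0 \<and> (\<forall>k > T + 1. y k = 0)}"

definition Enorm :: "nat \<Rightarrow> (nat \<Rightarrow> real) \<Rightarrow> real" where
  "Enorm T y = sqrt (\<Sum>k = 1..T. (fdiff y k)\<^sup>2)"

definition LM :: "nat \<Rightarrow> real \<Rightarrow> (nat \<Rightarrow> real) set" where
  "LM T M = {u. \<forall>k \<in> {1..T}. \<bar>u k\<bar> \<le> M}"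

definition maxnorm :: "nat \<Rightarrow> (nat \<Rightarrow> real) \<Rightarrow> real" where
  "maxnorm T u = Max ((\<lambda>k. \<bar>u k\<bar>) ` {1..T})"

definition Fprim :: "(nat \<Rightarrow> real \<Rightarrow> real \<Rightarrow> real) \<Rightarrow> nat \<Rightarrow> real \<Rightarrow> real \<Rightarrow> real" where
  "Fprim f k y u = (if 0 \<le> y then integral {0..y} (\<lambda>t. f k t u)
                    else - integral {y..0} (\<lambda>t. f k t u))"

definition Jfun :: "nat \<Rightarrow> (nat \<Rightarrow> real) \<Rightarrow> (nat \<Rightarrow> real \<Rightarrow> real \<Rightarrow> real) \<Rightarrow> (nat \<Rightarrow> real)
      \<Rightarrow> (nat \<Rightarrow> real) \<Rightarrow> (nat \<Rightarrow> real) \<Rightarrow> real" where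
  "Jfun T p f g u y =
     (\<Sum>k = 1..T+1. p k / 2 * (fdiff y (k - 1))\<^sup>2)
     - (\<Sum>k = 1..T. Fprim f k (y k) (u k))
     + (\<Sum>k = 1..T. g k * y k)"

text \<open>V_u: minimizers of J_u over E at which the derivative of J_u vanishes
  (derivative vanishing expressed as: the directional derivative of J_u at x
  exists and equals 0 in every direction h of E).\<close>
definition Vset :: "nat \<Rightarrow> (nat \<Rightarrow> real) \<Rightarrow> (nat \<Rightarrow> real \<Rightarrow> real \<Rightarrow> real) \<Rightarrow> (nat \<Rightarrow> real)
      \<Rightarrow> (nat \<Rightarrow> real) \<Rightarrow> (nat \<Rightarrow> real) set" where
  "Vset T p f g u = {x \<in> Espace T.
      (\<forall>v \<in> Espace T. Jfun T p f g u x \<le> Jfun T p f g u v) \<and>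
      (\<forall>h \<in> Espace T. ((\<lambda>t. Jfun T p f g u (\<lambda>k. x k + t * h k)) has_real_derivative 0) (at 0))}"

definition solves_bvp :: "nat \<Rightarrow> (nat \<Rightarrow> real) \<Rightarrow> (nat \<Rightarrow> real \<Rightarrow> real \<Rightarrow> real) \<Rightarrow> (nat \<Rightarrow> real)
      \<Rightarrow> (nat \<Rightarrow> real) \<Rightarrow> (nat \<Rightarrow> real) \<Rightarrow> bool" where
  "solves_bvp T p f g u x \<longleftrightarrow>
     x 0 = 0 \<and> x (T + 1) = 0 \<and>
     (\<forall>k \<in> {1..T}. fdiff (\<lambda>j. p j * fdiff x (j - 1)) k + f k (x k) (u k) = g k)"

end

theory Submission imports Defs begin

definition oint :: "(real \<Rightarrow> real) \<Rightarrow> real \<Rightarrow> real" where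
  "oint h y = (if 0 \<le> y then integral {0..y} h else - integral {y..0} h)"

lemma oint_eq:
  assumes h: "continuous_on UNIV h" and a: "a \<le> 0" "a \<le> y"
  shows "oint h y = integral {a..y} h - integral {a..0} h"
proof (cases "0 \<le> y")
  case True
  have "integral {a..0} h + integral {0..y} h = integral {a..y} h"
    by (rule Henstock_Kurzweil_Integration.integral_combine[where a=a and c=0 and b=y]) (use a True in \<open>auto intro!: integrable_continuous_real continuous_on_subset[OF h]\<close>)
  then show ?thesis using True by (simp add: oint_def)
next
  case False
  have "integral {a..y} h + integral {y..0} h = integral {a..0} h"
    by (rule Henstock_Kurzweil_Integration.integral_combine[where a=a and c=y and b=0]) (use a False in \<open>auto intro!: integrable_continuous_real continuous_on_subset[OF h]\<close>)
  then show ?thesis using False by (simp add: oint_def)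
qed

lemma oint_deriv:
  assumes h: "continuous_on UNIV h"
  shows "(oint h has_real_derivative h x) (at x)"
proof -
  define a where "a = min 0 x - 1"
  have d: "((\<lambda>y. integral {a..y} h) has_real_derivative h x) (at x within {a..x+1})"
    by (rule integral_has_real_derivative) (auto simp: a_def intro: continuous_on_subset[OF h])
  have "at x within {a..x+1} = at x" by (rule at_within_Icc_at) (auto simp: a_def)
  with d have d2: "((\<lambda>y. integral {a..y} h - integral {a..0} h) has_real_derivative h x) (at x)"
    by (auto intro!: derivative_eq_intros)
  show ?thesis
    by (rule has_field_derivative_transform_within_open[OF d2, of "{a<..}"])
       (auto simp: a_def intro!: oint_eq[OF h, symmetric])
qed

lemma oint_0: "oint h 0 = 0" by (simp add: oint_def)

lemma oint_lip_aux:
  assumes h: "continuous_on UNIV h" and B: "\<And>t. \<bar>t\<bar> \<le> R \<Longrightarrow> \<bar>h t\<bar> \<le> B"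
    and y: "\<bar>y\<bar> \<le> R" and z: "\<bar>z\<bar> \<le> R" and yz: "y < z"
  shows "\<bar>oint h z - oint h y\<bar> \<le> B * \<bar>z - y\<bar>"
proof -
  obtain w where w: "y < w" "w < z" "oint h z - oint h y = (z - y) * h w"
    using MVT2[OF yz, of "oint h" h] oint_deriv[OF h] by blast
  have "\<bar>h w\<bar> \<le> B" using w y z by (intro B) auto
  then show ?thesis using w yz by (simp add: abs_mult mult.commute mult_left_mono)
qed

lemma oint_lip:
  assumes h: "continuous_on UNIV h" and B: "\<And>t. \<bar>t\<bar> \<le> R \<Longrightarrow> \<bar>h t\<bar> \<le> B"
    and y: "\<bar>y\<bar> \<le> R" and z: "\<bar>z\<bar> \<le> R"
  shows "\<bar>oint h z - oint h y\<bar> \<le> B * \<bar>z - y\<bar>"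
proof -
  consider "y < z" | "y = z" | "z < y" by linarith
  then show ?thesis
  proof cases
    case 1 then show ?thesis using oint_lip_aux[OF h B y z] by blast
  next
    case 2 then show ?thesis by simp
  next
    case 3 then show ?thesis using oint_lip_aux[OF h B z y] by (simp add: abs_minus_commute)
  qed
qed

lemma oint_upper:
  assumes h: "continuous_on UNIV h" and al: "\<alpha> > 0"
    and sgn: "\<And>t. \<bar>t\<bar> \<ge> \<alpha> \<Longrightarrow> t * h t \<le> 0"
    and B: "\<And>t. \<bar>t\<bar> \<le> \<alpha> \<Longrightarrow> \<bar>h t\<bar> \<le> B"
  shows "oint h y \<le> \<alpha> * B"
proof -
  have small: "oint h y \<le> \<alpha> * B" if "\<bar>y\<bar> \<le> \<alpha>" for y
  proof -
    have "\<bar>oint h y - oint h 0\<bar> \<le> B * \<bar>y - 0\<bar>"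
      by (rule oint_lip[OF h B]) (use that al in auto)
    moreover have "B \<ge> 0" using B[of 0] al by auto
    ultimately show ?thesis using that
      by (simp add: oint_0) (metis abs_ge_self abs_mult mult.commute mult_left_mono order_trans)
  qed
  consider "\<bar>y\<bar> \<le> \<alpha>" | "y > \<alpha>" | "y < - \<alpha>" by linarith
  then show ?thesis
  proof cases
    case 1 then show ?thesis by (rule small)
  next
    case 2
    obtain w where w: "\<alpha> < w" "w < y" "oint h y - oint h \<alpha> = (y - \<alpha>) * h w"
      using MVT2[OF 2, of "oint h" h] oint_deriv[OF h] by blast
    have "w * h w \<le> 0" using w al by (intro sgn) auto
    then have "h w \<le> 0" using w al by (simp add: mult_le_0_iff)
    moreover have "(y - \<alpha>) * h w \<le> 0" using w \<open>h w \<le> 0\<close> by (intro mult_nonneg_nonpos) auto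
    ultimately have "oint h y \<le> oint h \<alpha>" using w by linarith
    then show ?thesis using small[of \<alpha>] al by simp
  next
    case 3
    obtain w where w: "y < w" "w < -\<alpha>" "oint h (-\<alpha>) - oint h y = (-\<alpha> - y) * h w"
      using MVT2[OF 3, of "oint h" h] oint_deriv[OF h] by blast
    have "w * h w \<le> 0" using w al by (intro sgn) auto
    then have "h w \<ge> 0" using w al by (simp add: mult_le_0_iff)
    moreover have "(- \<alpha> - y) * h w \<ge> 0" using w \<open>h w \<ge> 0\<close> by (intro mult_nonneg_nonneg) auto
    ultimately have "oint h y \<le> oint h (-\<alpha>)" using w by linarith
    then show ?thesis using small[of "-\<alpha>"] al by simp
  qed
qed

lemma oint_conv:
  assumes hn: "\<And>n. continuous_on UNIV (hs n)" and h: "continuous_on UNIV h"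
    and B: "\<And>n t. \<bar>t\<bar> \<le> \<bar>y\<bar> \<Longrightarrow> \<bar>hs n t\<bar> \<le> B"
    and c: "\<And>t. (\<lambda>n. hs n t) \<longlonglongrightarrow> h t"
  shows "(\<lambda>n. oint (hs n) y) \<longlonglongrightarrow> oint h y"
proof (cases "0 \<le> y")
  case True
  have "(\<lambda>n. integral {0..y} (hs n)) \<longlonglongrightarrow> integral {0..y} h"
    by (rule dominated_convergence(2)[where h="\<lambda>_. B"])
       (use True in \<open>auto intro!: integrable_continuous_real continuous_on_subset[OF hn] B c\<close>)
  then show ?thesis using True by (simp add: oint_def)
next
  case False
  have "(\<lambda>n. integral {y..0} (hs n)) \<longlonglongrightarrow> integral {y..0} h"
    by (rule dominated_convergence(2)[where h="\<lambda>_. B"])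
       (use False in \<open>auto intro!: integrable_continuous_real continuous_on_subset[OF hn] B c\<close>)
  then show ?thesis using False by (simp add: oint_def tendsto_minus)
qed

lemma subseq_fin:
  fixes x :: "nat \<Rightarrow> nat \<Rightarrow> real"
  assumes "finite K" and "\<forall>n k. k \<in> K \<longrightarrow> \<bar>x n k\<bar> \<le> R"
  shows "\<exists>r l. strict_mono r \<and> (\<forall>k\<in>K. (\<lambda>i. x (r i) k) \<longlonglongrightarrow> l k)"
  using assms
proof (induction K rule: finite_induct)
  case empty
  then show ?case by (intro exI[of _ id]) (auto simp: strict_mono_def)
next
  case (insert a K)
  then obtain r l where r: "strict_mono r" and l: "\<forall>k\<in>K. (\<lambda>i. x (r i) k) \<longlonglongrightarrow> l k" by auto
  have "bounded (range (\<lambda>i. x (r i) a))"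
    unfolding bounded_iff using insert.prems by auto
  then obtain la s where s: "strict_mono s" and la: "((\<lambda>i. x (r i) a) \<circ> s) \<longlonglongrightarrow> la"
    using bounded_imp_convergent_subsequence by blast
  show ?case
  proof (intro exI conjI ballI)
    show "strict_mono (r \<circ> s)" using r s by (rule strict_mono_o)
    fix k assume k: "k \<in> insert a K"
    show "(\<lambda>i. x ((r \<circ> s) i) k) \<longlonglongrightarrow> (l(a := la)) k"
    proof (cases "k = a")
      case True then show ?thesis using la by (simp add: o_def)
    next
      case False
      then have "k \<in> K" using k by auto
      then have "((\<lambda>i. x (r i) k) \<circ> s) \<longlonglongrightarrow> l k" using l LIMSEQ_subseq_LIMSEQ[OF _ s] by blast
      then show ?thesis using False by (simp add: o_def)
    qed
  qed
qed

locale setting =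
  fixes T :: nat and M :: real
    and f :: "nat \<Rightarrow> real \<Rightarrow> real \<Rightarrow> real"
    and p g :: "nat \<Rightarrow> real"
  assumes T1: "T \<ge> 1" and Mpos: "M > 0"
    and A1: "\<forall>k \<in> {1..T}. continuous_on (UNIV \<times> {-M..M}) (\<lambda>(y, u). f k y u)"
    and A2: "\<exists>\<alpha> > 0. \<forall>k \<in> {1..T}. \<forall>y u. \<bar>y\<bar> \<ge> \<alpha> \<longrightarrow> \<bar>u\<bar> \<le> M \<longrightarrow> y * f k y u \<le> 0"
    and A3: "Min (p ` {1..T+1}) > 0"
begin

lemma hcont:
  assumes k: "k \<in> {1..T}" and u: "\<bar>u\<bar> \<le> M"
  shows "continuous_on UNIV (\<lambda>t. f k t u)"
proof -
  have "continuous_on UNIV ((\<lambda>(y, u). f k y u) \<circ> (\<lambda>t. (t, u)))"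
    by (rule continuous_on_compose[OF _ continuous_on_subset[OF A1[rule_format, OF k]]])
       (use u in \<open>auto intro!: continuous_intros\<close>)
  then show ?thesis by (simp add: o_def)
qed

lemma Fp: "Fprim f k y u = oint (\<lambda>t. f k t u) y"
  by (simp add: Fprim_def oint_def)

lemma fbound:
  assumes k: "k \<in> {1..T}"
  shows "\<exists>B. \<forall>t u. \<bar>t\<bar> \<le> R \<longrightarrow> \<bar>u\<bar> \<le> M \<longrightarrow> \<bar>f k t u\<bar> \<le> B"
proof -
  have "compact ((\<lambda>(y, u). f k y u) ` ({-R..R} \<times> {-M..M}))"
    by (rule compact_continuous_image[OF continuous_on_subset[OF A1[rule_format, OF k]]])
       (auto intro: compact_Times)
  then obtain B where B: "\<forall>x \<in> (\<lambda>(y, u). f k y u) ` ({-R..R} \<times> {-M..M}). norm x \<le> B"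
    using compact_imp_bounded bounded_iff by metis
  show ?thesis
  proof (intro exI allI impI)
    fix t u :: real assume "\<bar>t\<bar> \<le> R" "\<bar>u\<bar> \<le> M"
    then have "(t, u) \<in> {-R..R} \<times> {-M..M}" by auto
    then show "\<bar>f k t u\<bar> \<le> B" using B by force
  qed
qed

lemma Fderiv:
  assumes k: "k \<in> {1..T}" and u: "\<bar>u\<bar> \<le> M"
  shows "((\<lambda>y. Fprim f k y u) has_real_derivative f k y u) (at y)"
  unfolding Fp using oint_deriv[OF hcont[OF k u]] by simp

lemma Fupper: "\<exists>Cf. \<forall>k\<in>{1..T}. \<forall>y u. \<bar>u\<bar> \<le> M \<longrightarrow> Fprim f k y u \<le> Cf k"
proof -
  obtain \<alpha> where al: "\<alpha> > 0" and sg: "\<forall>k \<in> {1..T}. \<forall>y u. \<bar>y\<bar> \<ge> \<alpha> \<longrightarrow> \<bar>u\<bar> \<le> M \<longrightarrow> y * f k y u \<le> 0"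
    using A2 by blast
  have "\<forall>k\<in>{1..T}. \<exists>C. \<forall>y u. \<bar>u\<bar> \<le> M \<longrightarrow> Fprim f k y u \<le> C"
  proof
    fix k assume k: "k \<in> {1..T}"
    obtain B where B: "\<forall>t u. \<bar>t\<bar> \<le> \<alpha> \<longrightarrow> \<bar>u\<bar> \<le> M \<longrightarrow> \<bar>f k t u\<bar> \<le> B"
      using fbound[OF k] by blast
    show "\<exists>C. \<forall>y u. \<bar>u\<bar> \<le> M \<longrightarrow> Fprim f k y u \<le> C"
      by (rule exI[of _ "\<alpha> * B"]) (auto simp: Fp intro!: oint_upper[OF hcont[OF k] al] sg[rule_format, OF k] B[rule_format])
  qed
  then show ?thesis by (rule bchoice)
qed

lemma Fcont:
  assumes k: "k \<in> {1..T}" and ys: "ys \<longlonglongrightarrow> y" and us: "us \<longlonglongrightarrow> u"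
    and usM: "\<And>n. \<bar>us n\<bar> \<le> M" and uM: "\<bar>u\<bar> \<le> M"
  shows "(\<lambda>n. Fprim f k (ys n) (us n)) \<longlonglongrightarrow> Fprim f k y u"
proof -
  define R where "R = \<bar>y\<bar> + 1"
  obtain B where B: "\<forall>t u. \<bar>t\<bar> \<le> R \<longrightarrow> \<bar>u\<bar> \<le> M \<longrightarrow> \<bar>f k t u\<bar> \<le> B"
    using fbound[OF k] by blast
  have ev: "eventually (\<lambda>n. dist (ys n) y < 1) sequentially"
    using ys by (simp add: tendsto_iff)
  have d1: "(\<lambda>n. Fprim f k (ys n) (us n) - Fprim f k y (us n)) \<longlonglongrightarrow> 0"
  proof (rule Lim_null_comparison)
    show "eventually (\<lambda>n. norm (Fprim f k (ys n) (us n) - Fprim f k y (us n)) \<le> B * \<bar>ys n - y\<bar>) sequentially"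
      using ev
    proof eventually_elim
      case (elim n)
      have "\<bar>ys n\<bar> \<le> R" "\<bar>y\<bar> \<le> R" using elim by (auto simp: R_def dist_real_def)
      then show ?case unfolding Fp real_norm_def
        by (intro oint_lip[OF hcont[OF k usM]]) (use B usM in auto)
    qed
    have "(\<lambda>n. B * \<bar>ys n - y\<bar>) \<longlonglongrightarrow> B * \<bar>y - y\<bar>"
      by (intro tendsto_intros ys)
    then show "(\<lambda>n. B * \<bar>ys n - y\<bar>) \<longlonglongrightarrow> 0" by simp
  qed
  have d2: "(\<lambda>n. Fprim f k y (us n)) \<longlonglongrightarrow> Fprim f k y u"
    unfolding Fp
  proof (rule oint_conv[OF hcont[OF k usM] hcont[OF k uM]])
    show "\<bar>f k t (us n)\<bar> \<le> B" if "\<bar>t\<bar> \<le> \<bar>y\<bar>" for n t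
      using B usM that by (auto simp: R_def)
    fix t
    have "((\<lambda>n. (\<lambda>(y, u). f k y u) (t, us n)) \<longlongrightarrow> (\<lambda>(y, u). f k y u) (t, u)) sequentially"
      by (rule continuous_on_tendsto_compose[OF A1[rule_format, OF k]])
         (use uM usM in \<open>auto intro!: tendsto_intros us always_eventually simp: abs_le_iff\<close>, metis minus_le_iff)
    then show "(\<lambda>n. f k t (us n)) \<longlonglongrightarrow> f k t u" by simp
  qed
  have "(\<lambda>n. (Fprim f k (ys n) (us n) - Fprim f k y (us n)) + Fprim f k y (us n)) \<longlonglongrightarrow> 0 + Fprim f k y u"
    by (intro tendsto_add d1 d2)
  then show ?thesis by simp
qed


lemma sum_shift1: fixes a :: "nat \<Rightarrow> real" shows "(\<Sum>k = 1..n. a (k - 1)) = (\<Sum>j<n. a j)"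
  by (induction n) (auto simp: atLeastAtMostSuc_conv)

lemma tele_bound:
  assumes "y 0 = 0" "k \<le> n"
  shows "\<bar>y k\<bar> \<le> (\<Sum>j<n. \<bar>fdiff y j\<bar>)"
proof -
  have "y k = (\<Sum>j<k. fdiff y j)"
    using sum_lessThan_telescope[of y k] assms by (simp add: fdiff_def)
  then have "\<bar>y k\<bar> \<le> (\<Sum>j<k. \<bar>fdiff y j\<bar>)" by (simp add: sum_abs)
  also have "\<dots> \<le> (\<Sum>j<n. \<bar>fdiff y j\<bar>)"
    by (rule sum_mono2) (use assms in auto)
  finally show ?thesis .
qed

lemma abs_le_sq: "\<bar>d::real\<bar> \<le> 1 + d^2"
proof -
  have "0 \<le> (\<bar>d\<bar> - 1)^2" by simp
  also have "(\<bar>d\<bar> - 1)^2 = d^2 - 2 * \<bar>d\<bar> + 1" by (simp add: power2_eq_square algebra_simps)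
  finally show ?thesis by (simp add: zero_le_power2)
qed

definition "mm = Min (p ` {1..T+1})"

lemma pge: "j \<in> {1..T+1} \<Longrightarrow> p j \<ge> mm"
  unfolding mm_def by (rule Min_le) auto

lemma mmpos: "mm > 0" using A3 by (simp add: mm_def)

lemma LM_le: "u \<in> LM T M \<Longrightarrow> k \<in> {1..T} \<Longrightarrow> \<bar>u k\<bar> \<le> M"
  by (simp add: LM_def)

lemma sq_ineq:
  fixes d G m :: real assumes "m > 0"
  shows "m/2 * d^2 - G * \<bar>d\<bar> \<ge> m/4 * d^2 - G^2/m"
proof -
  have "0 \<le> (m/2 * \<bar>d\<bar> - G)^2 / m" using assms by simp
  also have "(m/2 * \<bar>d\<bar> - G)^2 / m = m/4 * d^2 - G * \<bar>d\<bar> + G^2/m"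
    using assms by (simp add: power2_eq_square field_simps)
  finally show ?thesis by simp
qed

lemma coer: "\<exists>K0. \<forall>u \<in> LM T M. \<forall>y. y 0 = 0 \<longrightarrow>
   mm/4 * (\<Sum>j<T+1. (fdiff y j)^2) - K0 \<le> Jfun T p f g u y"
proof -
  obtain Cf where Cf: "\<forall>k\<in>{1..T}. \<forall>y u. \<bar>u\<bar> \<le> M \<longrightarrow> Fprim f k y u \<le> Cf k"
    using Fupper by blast
  define G where "G = (\<Sum>k=1..T. \<bar>g k\<bar>)"
  have G0: "G \<ge> 0" unfolding G_def by (rule sum_nonneg) auto
  show ?thesis
  proof (intro exI ballI allI impI)
    fix u and y :: "nat \<Rightarrow> real" assume u: "u \<in> LM T M" and y0: "y 0 = 0"
    define D where "D = (\<Sum>j<T+1. \<bar>fdiff y j\<bar>)"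
    have a: "(\<Sum>k = 1..T. Fprim f k (y k) (u k)) \<le> (\<Sum>k = 1..T. Cf k)"
      by (rule sum_mono) (use Cf LM_le[OF u] in auto)
    have "(\<Sum>k = 1..T. - \<bar>g k\<bar> * D) \<le> (\<Sum>k = 1..T. g k * y k)"
    proof (rule sum_mono)
      fix k assume k: "k \<in> {1..T}"
      have "\<bar>y k\<bar> \<le> D" unfolding D_def by (rule tele_bound[where y=y, OF y0]) (use k in auto)
      then have "\<bar>g k * y k\<bar> \<le> \<bar>g k\<bar> * D" by (simp add: abs_mult mult_left_mono)
      then show "- \<bar>g k\<bar> * D \<le> g k * y k" by linarith
    qed
    then have b: "- G * D \<le> (\<Sum>k = 1..T. g k * y k)"
      by (simp add: G_def sum_distrib_right sum_negf)
    have "(\<Sum>k = 1..T+1. p k / 2 * (fdiff y (k - 1))\<^sup>2) = (\<Sum>j<T+1. p (j+1) / 2 * (fdiff y j)\<^sup>2)"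
      using sum_shift1[of "\<lambda>j. p (j+1) / 2 * (fdiff y j)\<^sup>2" "T+1"] by simp
    also have "\<dots> \<ge> (\<Sum>j<T+1. mm / 2 * (fdiff y j)\<^sup>2)"
      by (rule sum_mono) (use pge in \<open>auto intro!: mult_right_mono divide_right_mono\<close>)
    finally have c: "(\<Sum>k = 1..T+1. p k / 2 * (fdiff y (k - 1))\<^sup>2) \<ge> (\<Sum>j<T+1. mm / 2 * (fdiff y j)\<^sup>2)" .
    have d: "(\<Sum>j<T+1. mm / 2 * (fdiff y j)\<^sup>2) - G * D \<ge> (\<Sum>j<T+1. mm/4 * (fdiff y j)^2 - G^2/mm)"
    proof -
      have "(\<Sum>j<T+1. mm/4 * (fdiff y j)^2 - G^2/mm) \<le> (\<Sum>j<T+1. mm / 2 * (fdiff y j)\<^sup>2 - G * \<bar>fdiff y j\<bar>)"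
        by (rule sum_mono) (rule sq_ineq[OF mmpos])
      also have "\<dots> = (\<Sum>j<T+1. mm / 2 * (fdiff y j)\<^sup>2) - G * D"
        by (simp only: D_def sum_subtractf sum_distrib_left)
      finally show ?thesis .
    qed
    have e: "(\<Sum>j<T+1. mm/4 * (fdiff y j)^2 - G^2/mm) = mm/4 * (\<Sum>j<T+1. (fdiff y j)^2) - (T+1) * (G^2/mm)"
      by (simp only: sum_subtractf sum_distrib_left sum_constant) simp
    show "mm/4 * (\<Sum>j<T+1. (fdiff y j)^2) - ((T+1) * (G^2/mm) + (\<Sum>k = 1..T. Cf k)) \<le> Jfun T p f g u y"
      unfolding Jfun_def using a b c d e by linarith
  qed
qed

lemma bound:
  "\<exists>R. \<forall>u \<in> LM T M. \<forall>y \<in> Espace T. Jfun T p f g u y \<le> K \<longrightarrow> (\<forall>k. \<bar>y k\<bar> \<le> R)"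
proof -
  obtain K0 where K0: "\<forall>u \<in> LM T M. \<forall>y. y 0 = 0 \<longrightarrow>
     mm/4 * (\<Sum>j<T+1. (fdiff y j)^2) - K0 \<le> Jfun T p f g u y"
    using coer by blast
  define Q where "Q = 4 * (K + K0) / mm"
  show ?thesis
  proof (intro exI ballI impI allI)
    fix u y k assume u: "u \<in> LM T M" and y: "y \<in> Espace T" and J: "Jfun T p f g u y \<le> K"
    have y0: "y 0 = 0" using y by (simp add: Espace_def)
    have "mm/4 * (\<Sum>j<T+1. (fdiff y j)^2) \<le> K + K0" using K0 u y0 J by fastforce
    then have Qb: "(\<Sum>j<T+1. (fdiff y j)^2) \<le> Q" using mmpos by (simp add: Q_def field_simps)
    have "(\<Sum>j<T+1. \<bar>fdiff y j\<bar>) \<le> (\<Sum>j<T+1. 1 + Q)"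
    proof (rule sum_mono)
      fix j assume j: "j \<in> {..<T+1}"
      have "(fdiff y j)^2 \<le> (\<Sum>j<T+1. (fdiff y j)^2)"
        by (rule member_le_sum) (use j in auto)
      moreover have "\<bar>fdiff y j\<bar> \<le> 1 + (fdiff y j)^2"
        by (rule abs_le_sq)
      ultimately show "\<bar>fdiff y j\<bar> \<le> 1 + Q" using Qb by linarith
    qed
    moreover have "\<bar>y k\<bar> \<le> (\<Sum>j<T+1. \<bar>fdiff y j\<bar>)"
    proof (cases "k \<le> T + 1")
      case True then show ?thesis by (rule tele_bound[where y=y, OF y0])
    next
      case False then have "y k = 0" using y by (simp add: Espace_def)
      then show ?thesis by (simp add: sum_nonneg)
    qed
    ultimately show "\<bar>y k\<bar> \<le> (T+1) * (1 + Q)" by simp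
  qed
qed


lemma Jcont:
  assumes zs: "\<And>k. (\<lambda>n. zs n k) \<longlonglongrightarrow> z k"
    and us: "\<And>k. k \<in> {1..T} \<Longrightarrow> (\<lambda>n. us n k) \<longlonglongrightarrow> u k"
    and usL: "\<And>n. us n \<in> LM T M" and uL: "u \<in> LM T M"
  shows "(\<lambda>n. Jfun T p f g (us n) (zs n)) \<longlonglongrightarrow> Jfun T p f g u z"
proof -
  have F: "(\<lambda>n. \<Sum>k = 1..T. Fprim f k (zs n k) (us n k)) \<longlonglongrightarrow> (\<Sum>k = 1..T. Fprim f k (z k) (u k))"
    by (rule tendsto_sum) (auto intro!: Fcont zs us LM_le[OF usL] LM_le[OF uL])
  show ?thesis unfolding Jfun_def fdiff_def
    by (intro tendsto_add tendsto_diff F tendsto_sum tendsto_mult tendsto_const zs tendsto_power)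
qed

lemma fdiff_lin: "fdiff (\<lambda>k. x k + t * h k) j = fdiff x j + t * fdiff h j"
  by (simp add: fdiff_def algebra_simps)

lemma Jder:
  assumes u: "u \<in> LM T M"
  shows "((\<lambda>t. Jfun T p f g u (\<lambda>k. x k + t * h k)) has_real_derivative
    (\<Sum>k=1..T+1. p k * fdiff x (k-1) * fdiff h (k-1)) - (\<Sum>k=1..T. f k (x k) (u k) * h k)
      + (\<Sum>k=1..T. g k * h k)) (at 0)"
proof -
  have d1: "((\<lambda>t. p k / 2 * (fdiff x (k-1) + t * fdiff h (k-1))\<^sup>2) has_real_derivative
       p k * fdiff x (k-1) * fdiff h (k-1)) (at 0)" for k
    by (auto intro!: derivative_eq_intros)
  have d2: "((\<lambda>t. Fprim f k (x k + t * h k) (u k)) has_real_derivative f k (x k) (u k) * h k) (at 0)"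
    if k: "k \<in> {1..T}" for k
  proof -
    have "DERIV (\<lambda>y. Fprim f k y (u k)) (x k + 0 * h k) :> f k (x k) (u k)"
      using Fderiv[OF k LM_le[OF u k]] by simp
    moreover have "((\<lambda>t. x k + t * h k) has_real_derivative h k) (at 0)"
      by (auto intro!: derivative_eq_intros)
    ultimately show ?thesis
      using DERIV_chain2[where f="\<lambda>y. Fprim f k y (u k)" and g="\<lambda>t. x k + t * h k" and x=0 and s=UNIV] by simp
  qed
  have d3: "((\<lambda>t. g k * (x k + t * h k)) has_real_derivative g k * h k) (at 0)" for k
    by (auto intro!: derivative_eq_intros)
  show ?thesis unfolding Jfun_def fdiff_lin
    by (intro DERIV_add DERIV_diff DERIV_sum d1 d2 d3) auto
qed

lemma Espace_lin: "x \<in> Espace T \<Longrightarrow> h \<in> Espace T \<Longrightarrow> (\<lambda>k. x k + t * h k) \<in> Espace T"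
  by (simp add: Espace_def)

lemma sum_delta_mult: "finite A \<Longrightarrow> (\<Sum>j\<in>A. a j * (if j = k then 1 else 0)) = (if k \<in> A then a k else (0::real))"
proof -
  assume A: "finite A"
  have "(\<Sum>j\<in>A. a j * (if j = k then 1 else 0)) = (\<Sum>j\<in>A. if j = k then a j else 0)"
    by (rule sum.cong) auto
  then show ?thesis using A by (simp add: sum.delta)
qed

lemma minder:
  assumes u: "u \<in> LM T M" and x: "x \<in> Espace T"
    and mn: "\<forall>v\<in>Espace T. Jfun T p f g u x \<le> Jfun T p f g u v"
  shows "x \<in> Vset T p f g u \<and> solves_bvp T p f g u x"
proof -
  have D0: "(\<Sum>k=1..T+1. p k * fdiff x (k-1) * fdiff h (k-1)) - (\<Sum>k=1..T. f k (x k) (u k) * h k)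
      + (\<Sum>k=1..T. g k * h k) = 0" if h: "h \<in> Espace T" for h
  proof (rule DERIV_local_min[OF Jder[OF u, of x h], of 1])
    show "\<forall>y. \<bar>0 - y\<bar> < 1 \<longrightarrow> Jfun T p f g u (\<lambda>k. x k + 0 * h k) \<le> Jfun T p f g u (\<lambda>k. x k + y * h k)"
      using mn Espace_lin[OF x h] by simp
  qed simp
  have "((\<lambda>t. Jfun T p f g u (\<lambda>k. x k + t * h k)) has_real_derivative 0) (at 0)"
    if h: "h \<in> Espace T" for h
    using Jder[OF u, of x h] unfolding D0[OF h] .
  then have V: "x \<in> Vset T p f g u"
    using x mn by (simp add: Vset_def)
  have S: "fdiff (\<lambda>j. p j * fdiff x (j - 1)) k + f k (x k) (u k) = g k" if k: "k \<in> {1..T}" for k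
  proof -
    define e where "e = (\<lambda>j::nat. if j = k then 1 else (0::real))"
    have eE: "e \<in> Espace T" using k by (auto simp: e_def Espace_def)
    have s1: "(\<Sum>j=1..T+1. p j * fdiff x (j-1) * fdiff e (j-1))
        = (\<Sum>j=1..T+1. (if j = k then p j * fdiff x (j-1) else 0))
          - (\<Sum>j=1..T+1. (if j = Suc k then p j * fdiff x (j-1) else 0))"
      unfolding sum_subtractf[symmetric]
      by (rule sum.cong) (use k in \<open>auto simp: e_def fdiff_def\<close>)
    also have "\<dots> = p k * fdiff x (k-1) - p (Suc k) * fdiff x k"
      using k by (simp add: sum.delta)
    finally have s1': "(\<Sum>j=1..T+1. p j * fdiff x (j-1) * fdiff e (j-1)) = p k * fdiff x (k-1) - p (Suc k) * fdiff x k" .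
    have s2: "(\<Sum>j=1..T. f j (x j) (u j) * e j) = f k (x k) (u k)"
      using k unfolding e_def by (subst sum_delta_mult) auto
    have s3: "(\<Sum>j=1..T. g j * e j) = g k"
      using k unfolding e_def by (subst sum_delta_mult) auto
    have "fdiff (\<lambda>j. p j * fdiff x (j - 1)) k = p (Suc k) * fdiff x k - p k * fdiff x (k - 1)"
      unfolding fdiff_def[of "\<lambda>j. p j * fdiff x (j - 1)"] by simp
    then show ?thesis using D0[OF eE] unfolding s1' s2 s3 by linarith
  qed
  show ?thesis using V S x by (simp add: solves_bvp_def Espace_def)
qed


lemma J0: "Jfun T p f g u (\<lambda>_. 0) = 0"
  by (simp add: Jfun_def fdiff_def Fp oint_0)

lemma main:
  assumes usL: "\<And>n. us n \<in> LM T M" and uL: "ubar \<in> LM T M"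
    and uc: "\<And>k. k \<in> {1..T} \<Longrightarrow> (\<lambda>n. us n k) \<longlonglongrightarrow> ubar k"
    and xE: "\<And>n. xs n \<in> Espace T"
    and mn: "\<And>n y. y \<in> Espace T \<Longrightarrow> Jfun T p f g (us n) (xs n) \<le> Jfun T p f g (us n) y + e n"
    and ec: "e \<longlonglongrightarrow> 0"
  shows "\<exists>r xbar. strict_mono r \<and> xbar \<in> Espace T \<and>
           (\<lambda>i. Enorm T (\<lambda>k. xs (r i) k - xbar k)) \<longlonglongrightarrow> 0 \<and>
           (\<forall>y \<in> Espace T. Jfun T p f g ubar xbar \<le> Jfun T p f g ubar y)"
proof -
  obtain E where E: "\<And>n. norm (e n) \<le> E"
    using convergent_imp_Bseq[of e] ec BseqE unfolding convergent_def by metis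
  have zE: "(\<lambda>_. 0) \<in> Espace T" by (simp add: Espace_def)
  have Jb: "Jfun T p f g (us n) (xs n) \<le> E" for n
    using mn[OF zE, of n] E[of n] by (simp add: J0)
  obtain R where R: "\<forall>u \<in> LM T M. \<forall>y \<in> Espace T. Jfun T p f g u y \<le> E \<longrightarrow> (\<forall>k. \<bar>y k\<bar> \<le> R)"
    using bound by blast
  have xb: "\<forall>n k. k \<in> {1..T} \<longrightarrow> \<bar>xs n k\<bar> \<le> R" using R usL xE Jb by blast
  obtain r l where r: "strict_mono r" and l: "\<forall>k\<in>{1..T}. (\<lambda>i. xs (r i) k) \<longlonglongrightarrow> l k"
    using subseq_fin[OF _ xb] by blast
  define xbar where "xbar = (\<lambda>k. if k \<in> {1..T} then l k else 0)"
  have xbE: "xbar \<in> Espace T" by (auto simp: xbar_def Espace_def)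
  have pc: "(\<lambda>i. xs (r i) k) \<longlonglongrightarrow> xbar k" for k
  proof (cases "k \<in> {1..T}")
    case True then show ?thesis using l by (simp add: xbar_def)
  next
    case False
    then have "k = 0 \<or> k = T + 1 \<or> k > T + 1" by auto
    then have "xs n k = 0" for n using xE[of n] by (auto simp: Espace_def)
    moreover have "xbar k = 0" using False unfolding xbar_def by (simp only: if_False)
    ultimately show ?thesis by simp
  qed
  have en: "(\<lambda>i. Enorm T (\<lambda>k. xs (r i) k - xbar k)) \<longlonglongrightarrow> 0"
  proof -
    have "(\<lambda>i. Enorm T (\<lambda>k. xs (r i) k - xbar k)) \<longlonglongrightarrow> sqrt (\<Sum>k = 1..T. (fdiff (\<lambda>k. xbar k - xbar k) k)\<^sup>2)"
      unfolding Enorm_def fdiff_def by (intro tendsto_intros pc)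
    then show ?thesis by (simp add: fdiff_def)
  qed
  have usr: "(\<lambda>n. us (r n) k) \<longlonglongrightarrow> ubar k" if "k \<in> {1..T}" for k
    using LIMSEQ_subseq_LIMSEQ[OF uc[OF that] r] by (simp add: o_def)
  have er: "(\<lambda>n. e (r n)) \<longlonglongrightarrow> 0" using LIMSEQ_subseq_LIMSEQ[OF ec r] by (simp add: o_def)
  have mnz: "Jfun T p f g ubar xbar \<le> Jfun T p f g ubar y" if y: "y \<in> Espace T" for y
  proof (rule LIMSEQ_le)
    show "(\<lambda>n. Jfun T p f g (us (r n)) (xs (r n))) \<longlonglongrightarrow> Jfun T p f g ubar xbar"
      by (rule Jcont[OF pc usr usL uL])
    have "(\<lambda>n. Jfun T p f g (us (r n)) y + e (r n)) \<longlonglongrightarrow> Jfun T p f g ubar y + 0"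
      by (intro tendsto_add Jcont[OF tendsto_const usr usL uL] er)
    then show "(\<lambda>n. Jfun T p f g (us (r n)) y + e (r n)) \<longlonglongrightarrow> Jfun T p f g ubar y" by simp
    show "\<exists>N. \<forall>n\<ge>N. Jfun T p f g (us (r n)) (xs (r n)) \<le> Jfun T p f g (us (r n)) y + e (r n)"
      using mn[OF y] by blast
  qed
  show ?thesis using r xbE en mnz by blast
qed


lemma part1:
  assumes u: "u \<in> LM T M"
  shows "\<exists>x\<in>Vset T p f g u. solves_bvp T p f g u x"
proof -
  obtain K0 where K0: "\<forall>u \<in> LM T M. \<forall>y. y 0 = 0 \<longrightarrow>
     mm/4 * (\<Sum>j<T+1. (fdiff y j)^2) - K0 \<le> Jfun T p f g u y"
    using coer by blast
  have lb: "- K0 \<le> Jfun T p f g u y" if "y \<in> Espace T" for y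
  proof -
    have "0 \<le> mm/4 * (\<Sum>j<T+1. (fdiff y j)^2)" using mmpos by (intro mult_nonneg_nonneg sum_nonneg) auto
    moreover have "y 0 = 0" using that by (simp add: Espace_def)
    ultimately show ?thesis using K0 u by fastforce
  qed
  define S where "S = Jfun T p f g u ` Espace T"
  have zE: "(\<lambda>_. 0) \<in> Espace T" by (simp add: Espace_def)
  have Sne: "S \<noteq> {}" using zE by (auto simp: S_def)
  have Sbdd: "bdd_below S" unfolding S_def bdd_below_def using lb by blast
  have "\<forall>n. \<exists>x. x \<in> Espace T \<and> Jfun T p f g u x < Inf S + inverse (real (Suc n))"
  proof
    fix n
    have "Inf S < Inf S + inverse (real (Suc n))" by simp
    from cInf_lessD[OF Sne this] show "\<exists>x. x \<in> Espace T \<and> Jfun T p f g u x < Inf S + inverse (real (Suc n))"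
      by (auto simp: S_def)
  qed
  then obtain xs where xs: "\<And>n. xs n \<in> Espace T" "\<And>n. Jfun T p f g u (xs n) < Inf S + inverse (real (Suc n))"
    by metis
  have mn: "Jfun T p f g u (xs n) \<le> Jfun T p f g u y + inverse (real (Suc n))" if y: "y \<in> Espace T" for n y
  proof -
    have "Inf S \<le> Jfun T p f g u y" by (rule cInf_lower) (use y Sbdd in \<open>auto simp: S_def\<close>)
    then show ?thesis using xs(2)[of n] by linarith
  qed
  obtain r xbar where xbar: "xbar \<in> Espace T" "\<forall>y \<in> Espace T. Jfun T p f g u xbar \<le> Jfun T p f g u y"
    using main[where us="\<lambda>_. u" and ubar=u and xs=xs and e="\<lambda>n. inverse (real (Suc n))",
        OF u u tendsto_const xs(1) mn LIMSEQ_inverse_real_of_nat] by blast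
  show ?thesis using minder[OF u xbar] by blast
qed

lemma part2:
  assumes usL: "\<forall>n. us n \<in> LM T M" and uL: "ubar \<in> LM T M"
    and uc: "(\<lambda>n. maxnorm T (\<lambda>k. us n k - ubar k)) \<longlonglongrightarrow> 0"
    and xV: "\<forall>n. xs n \<in> Vset T p f g (us n)"
  shows "\<exists>r xbar. strict_mono r \<and> xbar \<in> Espace T \<and>
                 (\<lambda>i. Enorm T (\<lambda>k. xs (r i) k - xbar k)) \<longlonglongrightarrow> 0 \<and>
                 (\<forall>y \<in> Espace T. Jfun T p f g ubar xbar \<le> Jfun T p f g ubar y) \<and>
                 xbar \<in> Vset T p f g ubar \<and> solves_bvp T p f g ubar xbar"
proof -
  have pw: "(\<lambda>n. us n k) \<longlonglongrightarrow> ubar k" if k: "k \<in> {1..T}" for k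
  proof -
    have "(\<lambda>n. us n k - ubar k) \<longlonglongrightarrow> 0"
    proof (rule Lim_null_comparison[OF always_eventually uc])
      show "\<forall>n. norm (us n k - ubar k) \<le> maxnorm T (\<lambda>k. us n k - ubar k)"
        using k by (auto simp: maxnorm_def intro!: Max_ge)
    qed
    then have "(\<lambda>n. (us n k - ubar k) + ubar k) \<longlonglongrightarrow> 0 + ubar k" by (intro tendsto_add tendsto_const)
    then show ?thesis by simp
  qed
  have xE: "\<And>n. xs n \<in> Espace T" using xV by (simp add: Vset_def)
  have mn: "\<And>n y. y \<in> Espace T \<Longrightarrow> Jfun T p f g (us n) (xs n) \<le> Jfun T p f g (us n) y + 0"
    using xV by (simp add: Vset_def)
  obtain r xbar where r: "strict_mono r" "xbar \<in> Espace T"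
      "(\<lambda>i. Enorm T (\<lambda>k. xs (r i) k - xbar k)) \<longlonglongrightarrow> 0"
      "\<forall>y \<in> Espace T. Jfun T p f g ubar xbar \<le> Jfun T p f g ubar y"
    using main[where e="\<lambda>_. 0", OF _ uL pw xE mn tendsto_const] usL by blast
  show ?thesis using r minder[OF uL r(2) r(4)] by blast
qed

end

theorem theorem1:
  fixes T :: nat and M :: real
    and f :: "nat \<Rightarrow> real \<Rightarrow> real \<Rightarrow> real"
    and p g :: "nat \<Rightarrow> real"
  assumes T1: "T \<ge> 1" and Mpos: "M > 0"
    and A1: "\<forall>k \<in> {1..T}. continuous_on (UNIV \<times> {-M..M}) (\<lambda>(y, u). f k y u)"
    and A2: "\<exists>\<alpha> > 0. \<forall>k \<in> {1..T}. \<forall>y u. \<bar>y\<bar> \<ge> \<alpha> \<longrightarrow> \<bar>u\<bar> \<le> M \<longrightarrow> y * f k y u \<le> 0"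
    and A3: "Min (p ` {1..T+1}) > 0"
  shows "(\<forall>u \<in> LM T M. Vset T p f g u \<noteq> {} \<and>
            (\<exists>x \<in> Vset T p f g u. solves_bvp T p f g u x))
         \<and> (\<forall>us ubar xs.
              (\<forall>n. us n \<in> LM T M) \<longrightarrow> ubar \<in> LM T M \<longrightarrow>
              (\<lambda>n. maxnorm T (\<lambda>k. us n k - ubar k)) \<longlonglongrightarrow> 0 \<longrightarrow>
              (\<forall>n. xs n \<in> Vset T p f g (us n)) \<longrightarrow>
              (\<exists>r xbar. strict_mono r \<and> xbar \<in> Espace T \<and>
                 (\<lambda>i. Enorm T (\<lambda>k. xs (r i) k - xbar k)) \<longlonglongrightarrow> 0 \<and>
                 (\<forall>y \<in> Espace T. Jfun T p f g ubar xbar \<le> Jfun T p f g ubar y) \<and>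
                 xbar \<in> Vset T p f g ubar \<and> solves_bvp T p f g ubar xbar))"
proof -
  interpret setting T M f p g using assms by unfold_locales
  show ?thesis using part1 part2 by blast
qed

end
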